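(* In the setting of the switching procedure below (with $\lambda=\Theta(\log n)$ and $k=\Theta(\lambda\log n)$), let $D:=\frac{2en\ln n}{k}$. Then $D=\Theta\left(\frac{n}{\log n}\right)$, and the probability that the procedure switches to the $(1+(\lambda,\lambda))$ GA before the $(1+1)$ EA has reached an individual at distance at most $D$ from the optimum is at most $1/n$.
   Context: The procedure maximizes $\mathrm{OneMax}(x)=\sum_{i=1}^n x_i$ on $\{0,1\}^n$ (optimum $1^n$; distance = number of zero-bits). It starts from a uniformly random point and runs the $(1+1)$ EA (each iteration: create one offspring by flipping each bit independently with probability $1/n$, accept it if its fitness is at least the current one) until, for the first time, $k$ consecutive $(1+1)$ EA iterations fail to create a strictly better offspring; then it switches irrevocably to the $(1+(\lambda,\lambda))$ GA with population size $\lambda$ (each iteration: sample $\ell\sim\mathrm{Bin}(n,\lambda/n)$, create $\lambda$ offspring each flipping exactly $\ell$ uniformly random distinct positions, take a best one $x'$; create $\lambda$ crossover offspring each taking per position the bit of $x'$ with probability $1/\lambda$ and of $x$ otherwise; accept a best one $y$ if $f(y)\ge f(x)$). Here $\lambda=\lambda(n)=\Theta(\log n)$ and $k=k(n)=\Theta(\lambda\log n)$. *)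

theory Defs
  imports "HOL-Probability.Probability" "HOL-Library.Landau_Symbols"
begin

text \<open>Bit strings of length n are represented as functions nat => bool that are
  False outside the positions 0..n-1.\<close>

definition bitstrings :: "nat \<Rightarrow> (nat \<Rightarrow> bool) set" where
  "bitstrings n = {x. \<forall>i. n \<le> i \<longrightarrow> \<not> x i}"

definition onemax :: "nat \<Rightarrow> (nat \<Rightarrow> bool) \<Rightarrow> nat" where
  "onemax n x = card {i. i < n \<and> x i}"

definition dist_opt :: "nat \<Rightarrow> (nat \<Rightarrow> bool) \<Rightarrow> nat" where
  "dist_opt n x = n - onemax n x"

definition init_pmf :: "nat \<Rightarrow> (nat \<Rightarrow> bool) pmf" where
  "init_pmf n = pmf_of_set (bitstrings n)"

definition mask_pmf :: "nat \<Rightarrow> (nat \<Rightarrow> bool) pmf" where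
  "mask_pmf n = Pi_pmf {..<n} False (\<lambda>_. bernoulli_pmf (1 / real n))"

definition flip :: "(nat \<Rightarrow> bool) \<Rightarrow> (nat \<Rightarrow> bool) \<Rightarrow> (nat \<Rightarrow> bool)" where
  "flip x m = (\<lambda>i. x i \<noteq> m i)"

text \<open>One (1+1) EA iteration on the state (current individual, number of
  consecutive iterations without strict improvement), using mask m.\<close>
definition ea_step :: "nat \<Rightarrow> (nat \<Rightarrow> bool) \<times> nat \<Rightarrow> (nat \<Rightarrow> bool) \<Rightarrow> (nat \<Rightarrow> bool) \<times> nat" where
  "ea_step n s m =
     (let x = fst s; c = snd s; y = flip x m in
      if onemax n y > onemax n x then (y, 0)
      else if onemax n y = onemax n x then (y, Suc c)
      else (x, Suc c))"

primrec ea_run :: "nat \<Rightarrow> (nat \<Rightarrow> bool) \<Rightarrow> (nat \<Rightarrow> bool) stream \<Rightarrow> nat \<Rightarrow> (nat \<Rightarrow> bool) \<times> nat" where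
  "ea_run n x0 \<omega> 0 = (x0, 0)"
| "ea_run n x0 \<omega> (Suc t) = ea_step n (ea_run n x0 \<omega> t) (\<omega> !! t)"

definition ea_space :: "nat \<Rightarrow> ((nat \<Rightarrow> bool) \<times> (nat \<Rightarrow> bool) stream) measure" where
  "ea_space n = measure_pmf (init_pmf n) \<Otimes>\<^sub>M stream_space (measure_pmf (mask_pmf n))"

text \<open>Event: the procedure switches (k consecutive non-improving EA iterations
  occur) at a time t at which the EA has not yet reached (at any time s \<le> t)
  an individual at distance at most D from the optimum.\<close>
definition switch_early :: "nat \<Rightarrow> nat \<Rightarrow> real \<Rightarrow> ((nat \<Rightarrow> bool) \<times> (nat \<Rightarrow> bool) stream) set" where
  "switch_early n k D =
     {(x0, \<omega>). \<exists>t. snd (ea_run n x0 \<omega> t) = k \<and>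
                  (\<forall>s\<le>t. real (dist_opt n (fst (ea_run n x0 \<omega> s))) > D)}"

end

theory Submission
  imports Defs
begin

definition R :: "nat \<Rightarrow> (nat \<Rightarrow> bool) \<Rightarrow> (nat \<Rightarrow> bool)" where
  "R n x = (\<lambda>i. i < n \<and> x i)"

primrec runF :: "nat \<Rightarrow> (nat \<Rightarrow> bool) \<times> nat \<Rightarrow> (nat \<Rightarrow> bool) stream \<Rightarrow> nat \<Rightarrow> (nat \<Rightarrow> bool) \<times> nat" where
  "runF n s \<omega> 0 = s"
| "runF n s \<omega> (Suc t) = ea_step n (runF n s \<omega> t) (\<omega> !! t)"

lemma ea_run_runF: "ea_run n x0 \<omega> t = runF n (x0, 0) \<omega> t"
  by (induction t) auto

lemma runF_Suc': "runF n s \<omega> (Suc t) = runF n (ea_step n s (shd \<omega>)) (stl \<omega>) t"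
  by (induction t) auto

lemma onemax_R: "onemax n (R n x) = onemax n x"
  unfolding onemax_def R_def by auto

lemma dist_R: "dist_opt n (R n x) = dist_opt n x"
  unfolding dist_opt_def by (simp add: onemax_R)

lemma R_flip: "R n (flip x m) = R n (flip (R n x) (R n m))"
  unfolding R_def flip_def by auto

lemma onemax_flip_R: "onemax n (flip x m) = onemax n (flip (R n x) (R n m))"
  by (metis R_flip onemax_R)

lemma R_flip_R: "R n (flip (R n x) (R n m)) = flip (R n x) (R n m)"
  unfolding R_def flip_def by auto

lemma ea_step_R: "ea_step n (R n x, c) (R n m) = (R n (fst (ea_step n (x, c) m)), snd (ea_step n (x, c) m))"
  unfolding ea_step_def Let_def
  by (auto simp: onemax_flip_R[of n x m] onemax_R R_flip[of n x m] R_flip_R)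

lemma runF_R: "runF n (R n (fst s), snd s) (smap (R n) \<omega>) t = (R n (fst (runF n s \<omega> t)), snd (runF n s \<omega> t))"
proof (induction t)
  case 0 then show ?case by simp
next
  case (Suc t)
  have "runF n (R n (fst s), snd s) (smap (R n) \<omega>) (Suc t) =
    ea_step n (R n (fst (runF n s \<omega> t)), snd (runF n s \<omega> t)) (R n (\<omega> !! t))"
    using Suc by simp
  also have "\<dots> = (R n (fst (runF n s \<omega> (Suc t))), snd (runF n s \<omega> (Suc t)))"
    by (subst ea_step_R) (simp)
  finally show ?case .
qed

lemma dist_le: "dist_opt n x \<le> n"
  unfolding dist_opt_def by simp

lemma onemax_le: "onemax n x \<le> n"
  unfolding onemax_def by (rule order_trans[OF card_mono[of "{..<n}"]]) auto

lemma dist_card: "dist_opt n x = card {i. i < n \<and> \<not> x i}"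
proof -
  have "{..<n} = {i. i < n \<and> x i} \<union> {i. i < n \<and> \<not> x i}" by auto
  then have "n = card {i. i < n \<and> x i} + card {i. i < n \<and> \<not> x i}"
    by (metis (no_types, lifting) card_Un_disjoint card_lessThan disjoint_iff finite_Un finite_lessThan mem_Collect_eq)
  then show ?thesis unfolding dist_opt_def onemax_def by simp
qed

lemma onemax_flip_single:
  assumes "i < n" "\<not> x i"
  shows "onemax n (flip x (\<lambda>j. j = i)) = Suc (onemax n x)"
proof -
  have "{j. j < n \<and> flip x (\<lambda>j. j = i) j} = insert i {j. j < n \<and> x j}"
    using assms unfolding flip_def by auto
  then show ?thesis unfolding onemax_def using assms by simp
qed

definition p1 :: "nat \<Rightarrow> real" where
  "p1 n = (1 / real n) * (1 - 1 / real n) ^ (n - 1)"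

lemma pmf_single:
  assumes "i < n"
  shows "pmf (mask_pmf n) (\<lambda>j. j = i) = p1 n"
proof -
  have n: "n \<ge> 1" using assms by simp
  have b: "0 \<le> 1 / real n" "1 / real n \<le> 1" using n by auto
  have "pmf (mask_pmf n) (\<lambda>j. j = i) = (\<Prod>j\<in>{..<n}. pmf (bernoulli_pmf (1 / real n)) (j = i))"
    unfolding mask_pmf_def using assms by (subst pmf_Pi') auto
  also have "{..<n} = insert i ({..<n} - {i})" using assms by auto
  also have "(\<Prod>j\<in>insert i ({..<n} - {i}). pmf (bernoulli_pmf (1 / real n)) (j = i))
      = pmf (bernoulli_pmf (1 / real n)) True * (\<Prod>j\<in>{..<n} - {i}. pmf (bernoulli_pmf (1 / real n)) False)"
    by (subst prod.insert) (auto intro!: prod.cong)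
  also have "\<dots> = p1 n"
    using b assms unfolding p1_def by (simp add: card_Diff_singleton)
  finally show ?thesis .
qed

lemma prob_improve:
  assumes "1 \<le> n"
  shows "real (dist_opt n x) * p1 n \<le>
    measure (measure_pmf (mask_pmf n)) {m. onemax n x < onemax n (flip x (R n m))}"
proof -
  define Z where "Z = {i. i < n \<and> \<not> x i}"
  define e where "e = (\<lambda>i::nat. (\<lambda>j::nat. j = i))"
  have fZ: "finite Z" unfolding Z_def by auto
  have inj: "inj_on e Z" unfolding e_def inj_on_def by metis
  have sub: "e ` Z \<subseteq> {m. onemax n x < onemax n (flip x (R n m))}"
  proof
    fix m assume "m \<in> e ` Z"
    then obtain i where i: "i < n" "\<not> x i" "m = e i" unfolding Z_def by auto
    have "R n m = (\<lambda>j. j = i)" using i unfolding R_def e_def by auto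
    then show "m \<in> {m. onemax n x < onemax n (flip x (R n m))}"
      using onemax_flip_single[of i n x] i by simp
  qed
  have "measure (measure_pmf (mask_pmf n)) (e ` Z) = (\<Sum>m\<in>e ` Z. pmf (mask_pmf n) m)"
    using fZ by (simp add: measure_measure_pmf_finite)
  also have "\<dots> = (\<Sum>i\<in>Z. pmf (mask_pmf n) (e i))"
    using inj by (simp add: sum.reindex)
  also have "\<dots> = (\<Sum>i\<in>Z. p1 n)"
    by (intro sum.cong) (auto simp: Z_def e_def pmf_single)
  also have "\<dots> = real (dist_opt n x) * p1 n"
    by (simp add: dist_card Z_def)
  finally have "measure (measure_pmf (mask_pmf n)) (e ` Z) = real (dist_opt n x) * p1 n" .
  moreover have "measure (measure_pmf (mask_pmf n)) (e ` Z) \<le> measure (measure_pmf (mask_pmf n)) {m. onemax n x < onemax n (flip x (R n m))}"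
    by (rule measure_pmf.finite_measure_mono[OF sub]) simp
  ultimately show ?thesis by simp
qed

lemma p1_nonneg: "0 \<le> p1 n"
  unfolding p1_def by (cases "n = 0") auto

lemma p1_le: "real n * p1 n \<le> 1"
proof (cases "n = 0")
  case False
  then have "(1 - 1 / real n) ^ (n - 1) \<le> 1" by (intro power_le_one) auto
  then show ?thesis using False unfolding p1_def by simp
qed (simp add: p1_def)

lemma p1_ge: assumes "1 \<le> n" shows "1 / (exp 1 * real n) \<le> p1 n"
proof (cases "n = 1")
  case True then show ?thesis by (simp add: p1_def)
next
  case False
  then have n2: "n \<ge> 2" using assms by simp
  define m where "m = n - 1"
  have m: "m \<ge> 1" "real n = real m + 1" using n2 unfolding m_def by auto
  have "(1 + 1 / real m) ^ m \<le> exp (1 / real m) ^ m"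
    by (intro power_mono) (auto simp: exp_ge_add_one_self add.commute)
  also have "\<dots> = exp 1" using m by (simp add: exp_of_nat_mult[symmetric])
  finally have A: "(1 + 1 / real m) ^ m \<le> exp 1" .
  have "1 - 1 / real n = 1 / (1 + 1 / real m)" using m by (simp add: field_simps)
  then have "(1 - 1 / real n) ^ (n - 1) = 1 / (1 + 1 / real m) ^ m"
    by (simp add: m_def power_one_over)
  also have "\<dots> \<ge> 1 / exp 1" using A m by (intro divide_left_mono mult_pos_pos zero_less_power) (auto simp: add_pos_nonneg)
  finally have "1 / exp 1 \<le> (1 - 1 / real n) ^ (n - 1)" .
  then have "1 / real n * (1 / exp 1) \<le> p1 n" unfolding p1_def
    by (intro mult_left_mono) auto
  then show ?thesis by (simp add: mult.commute)
qed

definition q :: "nat \<Rightarrow> nat \<Rightarrow> real" where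
  "q n d = 1 - real d * p1 n"

definition Sd :: "nat \<Rightarrow> nat \<Rightarrow> real \<Rightarrow> nat \<Rightarrow> real" where
  "Sd n k D d = (\<Sum>d'\<in>{d'. D < real d' \<and> d' < d}. q n d' ^ k)"

definition Phi :: "nat \<Rightarrow> nat \<Rightarrow> real \<Rightarrow> (nat \<Rightarrow> bool) \<times> nat \<Rightarrow> real" where
  "Phi n k D s = (if real (dist_opt n (fst s)) \<le> D then 0
     else (if snd s \<le> k then q n (dist_opt n (fst s)) ^ (k - snd s) else 0) + Sd n k D (dist_opt n (fst s)))"

lemma q_nonneg: "d \<le> n \<Longrightarrow> 0 \<le> q n d"
proof -
  assume "d \<le> n"
  then have "real d * p1 n \<le> real n * p1 n" by (intro mult_right_mono) (auto simp: p1_nonneg)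
  then show ?thesis using p1_le[of n] unfolding q_def by linarith
qed

lemma fin_Sd: "finite {d'. D < real d' \<and> d' < d}"
  by (rule finite_subset[of _ "{..<d}"]) auto

lemma Sd_nonneg: "d \<le> n \<Longrightarrow> 0 \<le> Sd n k D d"
  unfolding Sd_def by (intro sum_nonneg zero_le_power q_nonneg) auto

lemma Sd_step:
  assumes "d' < d" "d \<le> n" "D < real d'"
  shows "q n d' ^ k + Sd n k D d' \<le> Sd n k D d"
proof -
  have "q n d' ^ k + Sd n k D d' = (\<Sum>d''\<in>insert d' {d''. D < real d'' \<and> d'' < d'}. q n d'' ^ k)"
    unfolding Sd_def by (subst sum.insert) (auto simp: fin_Sd)
  also have "\<dots> \<le> Sd n k D d" unfolding Sd_def
    using assms by (intro sum_mono2 fin_Sd) (auto intro!: zero_le_power q_nonneg)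
  finally show ?thesis .
qed

lemma Phi_nonneg: "0 \<le> Phi n k D s"
  unfolding Phi_def using dist_le[of n "fst s"]
  by (auto intro!: add_nonneg_nonneg Sd_nonneg zero_le_power q_nonneg)

lemma dist_lt: "onemax n x < onemax n y \<Longrightarrow> dist_opt n y < dist_opt n x"
  unfolding dist_opt_def using onemax_le[of n y] by simp

lemma Phi_step:
  assumes "D < real (dist_opt n (fst s))"
  shows "Phi n k D (ea_step n s m) \<le> Sd n k D (dist_opt n (fst s)) +
     (if onemax n (fst s) < onemax n (flip (fst s) m) then 0
      else (if Suc (snd s) \<le> k then q n (dist_opt n (fst s)) ^ (k - Suc (snd s)) else 0))"
proof -
  define x where "x = fst s"
  define d where "d = dist_opt n x"
  have dn: "d \<le> n" unfolding d_def by (rule dist_le)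
  have Dd: "D < real d" using assms unfolding d_def x_def by simp
  show ?thesis
  proof (cases "onemax n x < onemax n (flip x m)")
    case True
    then have st: "ea_step n s m = (flip x m, 0)"
      unfolding ea_step_def x_def by (simp add: Let_def)
    define d' where "d' = dist_opt n (flip x m)"
    have "d' < d" unfolding d'_def d_def by (rule dist_lt[OF True])
    moreover have "Phi n k D (ea_step n s m) = (if real d' \<le> D then 0 else q n d' ^ k + Sd n k D d')"
      unfolding st by (simp add: Phi_def d'_def)
    ultimately have "Phi n k D (ea_step n s m) \<le> Sd n k D d"
      using Sd_step[of d' d n D k] Sd_nonneg[OF dn] dn
      by auto
    then show ?thesis using True unfolding x_def d_def by simp
  next
    case False
    then have st: "ea_step n s m = (if onemax n (flip x m) = onemax n x then flip x m else x, Suc (snd s))"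
      unfolding ea_step_def x_def by (auto simp: Let_def)
    have "dist_opt n (fst (ea_step n s m)) = d"
      unfolding st d_def dist_opt_def by auto
    then have "Phi n k D (ea_step n s m) = (if Suc (snd s) \<le> k then q n d ^ (k - Suc (snd s)) else 0) + Sd n k D d"
      unfolding Phi_def using Dd st by simp
    then show ?thesis using False unfolding x_def d_def by simp
  qed
qed

definition FF :: "nat \<Rightarrow> (nat \<Rightarrow> bool) \<times> nat \<Rightarrow> nat \<Rightarrow> (nat \<Rightarrow> bool) stream \<Rightarrow> (nat \<Rightarrow> bool) \<times> nat" where
  "FF n s t \<omega> = runF n s (smap (R n) \<omega>) t"

definition Bad :: "nat \<Rightarrow> nat \<Rightarrow> real \<Rightarrow> nat \<Rightarrow> (nat \<Rightarrow> bool) \<times> nat \<Rightarrow> (nat \<Rightarrow> bool) stream set" where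
  "Bad n k D T s = {\<omega>. \<exists>t\<le>T. snd (FF n s t \<omega>) = k \<and> (\<forall>u\<le>t. D < real (dist_opt n (fst (FF n s u \<omega>))))}"

lemma finite_bitstrings: "finite (bitstrings n)"
proof -
  have "bitstrings n \<subseteq> (\<lambda>A i. i \<in> A) ` Pow {..<n}"
  proof
    fix x assume "x \<in> bitstrings n"
    then have "x = (\<lambda>i. i \<in> {i. i < n \<and> x i})" unfolding bitstrings_def
      by (auto simp: fun_eq_iff) (meson not_less)
    then show "x \<in> (\<lambda>A i. i \<in> A) ` Pow {..<n}" by blast
  qed
  then show ?thesis by (rule finite_subset) auto
qed

lemma R_bitstrings: "R n m \<in> bitstrings n"
  unfolding R_def bitstrings_def by auto

lemma R_meas: "R n \<in> measurable (measure_pmf p) (count_space (bitstrings n))"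
  unfolding measurable_def by (auto simp: R_bitstrings)

lemma any_meas_pmf: "f \<in> measurable (measure_pmf p) (count_space UNIV)"
  unfolding measurable_def by auto

lemma FF_meas: "FF n s t \<in> measurable (stream_space (measure_pmf p)) (count_space UNIV)"
proof (induction t)
  case 0 then show ?case by (simp add: FF_def)
next
  case (Suc t)
  have eq: "FF n s (Suc t) = (\<lambda>\<omega>. (\<lambda>b \<omega>. ea_step n (FF n s t \<omega>) b) (R n (\<omega> !! t)) \<omega>)"
    by (simp add: FF_def fun_eq_iff)
  show ?case unfolding eq
  proof (rule measurable_compose_countable'[where I="bitstrings n"])
    fix b
    show "(\<lambda>\<omega>. ea_step n (FF n s t \<omega>) b) \<in> measurable (stream_space (measure_pmf p)) (count_space UNIV)"
      using measurable_compose[OF Suc.IH measurable_count_space[of "\<lambda>z. ea_step n z b"]] by simp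
  next
    show "(\<lambda>\<omega>. R n (\<omega> !! t)) \<in> measurable (stream_space (measure_pmf p)) (count_space (bitstrings n))"
      using measurable_compose[OF measurable_snth R_meas] by simp
  next
    show "countable (bitstrings n)" using finite_bitstrings by (rule countable_finite)
  qed
qed

lemma FF_pred: "{\<omega>. P (FF n s t \<omega>)} \<in> sets (stream_space (measure_pmf p))"
proof -
  have "FF n s t -` {z. P z} \<inter> space (stream_space (measure_pmf p)) \<in> sets (stream_space (measure_pmf p))"
    by (rule measurable_sets[OF FF_meas]) simp
  then show ?thesis by (simp add: space_stream_space vimage_def)
qed

lemma Bad_sets: "Bad n k D T s \<in> sets (stream_space (measure_pmf p))"
proof -
  have "Bad n k D T s = (\<Union>t\<in>{..T}. {\<omega>. snd (FF n s t \<omega>) = k} \<inter> (\<Inter>u\<in>{..t}. {\<omega>. D < real (dist_opt n (fst (FF n s u \<omega>)))}))"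
    unfolding Bad_def by auto
  also have "\<dots> \<in> sets (stream_space (measure_pmf p))"
    by (intro sets.finite_UN sets.Int sets.finite_INT FF_pred) auto
  finally show ?thesis .
qed

lemma FF_Suc: "FF n s (Suc t) \<omega> = FF n (ea_step n s (R n (shd \<omega>))) t (stl \<omega>)"
  unfolding FF_def by (subst runF_Suc') simp

lemma FF_0: "FF n s 0 \<omega> = s"
  unfolding FF_def by simp

lemma Bad_0: "Bad n k D 0 s = {\<omega>. snd s = k \<and> D < real (dist_opt n (fst s))}"
  unfolding Bad_def by (auto simp: FF_0)

lemma Bad_Suc: "Bad n k D (Suc T) s = {\<omega>. D < real (dist_opt n (fst s)) \<and>
   (snd s = k \<or> stl \<omega> \<in> Bad n k D T (ea_step n s (R n (shd \<omega>))))}"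
proof (intro set_eqI iffI)
  fix \<omega> assume "\<omega> \<in> Bad n k D (Suc T) s"
  then obtain t where t: "t \<le> Suc T" "snd (FF n s t \<omega>) = k"
    "\<And>u. u \<le> t \<Longrightarrow> D < real (dist_opt n (fst (FF n s u \<omega>)))" unfolding Bad_def by auto
  have D0: "D < real (dist_opt n (fst s))" using t(3)[of 0] by (simp add: FF_0)
  show "\<omega> \<in> {\<omega>. D < real (dist_opt n (fst s)) \<and>
   (snd s = k \<or> stl \<omega> \<in> Bad n k D T (ea_step n s (R n (shd \<omega>))))}"
  proof (cases t)
    case 0 then show ?thesis using t D0 by (simp add: FF_0)
  next
    case (Suc t')
    have "stl \<omega> \<in> Bad n k D T (ea_step n s (R n (shd \<omega>)))"
      unfolding Bad_def
    proof (intro CollectI exI conjI allI impI)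
      show "t' \<le> T" using Suc t by simp
      show "snd (FF n (ea_step n s (R n (shd \<omega>))) t' (stl \<omega>)) = k" using t(2) Suc by (simp add: FF_Suc)
      fix u assume "u \<le> t'"
      then show "D < real (dist_opt n (fst (FF n (ea_step n s (R n (shd \<omega>))) u (stl \<omega>))))"
        using t(3)[of "Suc u"] Suc by (simp add: FF_Suc)
    qed
    then show ?thesis using D0 by simp
  qed
next
  fix \<omega> assume a: "\<omega> \<in> {\<omega>. D < real (dist_opt n (fst s)) \<and>
   (snd s = k \<or> stl \<omega> \<in> Bad n k D T (ea_step n s (R n (shd \<omega>))))}"
  then have D0: "D < real (dist_opt n (fst s))" by simp
  show "\<omega> \<in> Bad n k D (Suc T) s"
  proof (cases "snd s = k")
    case True then show ?thesis unfolding Bad_def using D0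
      by (intro CollectI exI[of _ 0]) (auto simp: FF_0)
  next
    case False
    then obtain t where t: "t \<le> T" "snd (FF n (ea_step n s (R n (shd \<omega>))) t (stl \<omega>)) = k"
      "\<And>u. u \<le> t \<Longrightarrow> D < real (dist_opt n (fst (FF n (ea_step n s (R n (shd \<omega>))) u (stl \<omega>))))"
      using a unfolding Bad_def by auto
    show ?thesis unfolding Bad_def
    proof (intro CollectI exI[of _ "Suc t"] conjI allI impI)
      show "Suc t \<le> Suc T" using t by simp
      show "snd (FF n s (Suc t) \<omega>) = k" using t by (simp add: FF_Suc)
      fix u assume u: "u \<le> Suc t"
      show "D < real (dist_opt n (fst (FF n s u \<omega>)))"
      proof (cases u)
        case 0 then show ?thesis using D0 by (simp add: FF_0)
      next
        case (Suc u') then show ?thesis using t(3)[of u'] u by (simp add: FF_Suc)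
      qed
    qed
  qed
qed

lemma Bad_bound:
  assumes n: "1 \<le> n"
  shows "emeasure (stream_space (measure_pmf (mask_pmf n))) (Bad n k D T s) \<le> ennreal (Phi n k D s)"
proof (induction T arbitrary: s)
  case 0
  show ?case
  proof (cases "snd s = k \<and> D < real (dist_opt n (fst s))")
    case True
    then have "Phi n k D s = 1 + Sd n k D (dist_opt n (fst s))" unfolding Phi_def by simp
    then have "1 \<le> Phi n k D s" using Sd_nonneg[OF dist_le] by simp
    moreover have "emeasure (stream_space (measure_pmf (mask_pmf n))) (Bad n k D 0 s) \<le> 1"
      by (rule prob_space.emeasure_le_1[OF prob_space.prob_space_stream_space[OF prob_space_measure_pmf]])
    ultimately show ?thesis by (metis ennreal_1 ennreal_leI order_trans)
  next
    case False
    then have "Bad n k D 0 s = {}" by (auto simp: Bad_0)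
    then show ?thesis by simp
  qed
next
  case (Suc T)
  define M where "M = measure_pmf (mask_pmf n)"
  define S where "S = stream_space M"
  define x where "x = fst s"
  define c where "c = snd s"
  define d where "d = dist_opt n x"
  have dn: "d \<le> n" unfolding d_def by (rule dist_le)
  interpret S: prob_space S unfolding S_def M_def by (rule prob_space.prob_space_stream_space[OF prob_space_measure_pmf])
  show ?case
  proof (cases "D < real d")
    case False then show ?thesis by (simp add: Bad_Suc d_def x_def)
  next
    case Dd: True
    show ?thesis
    proof (cases "c = k")
      case True
      then have "Phi n k D s = 1 + Sd n k D d" unfolding Phi_def using Dd by (simp add: c_def d_def x_def)
      then have "1 \<le> Phi n k D s" using Sd_nonneg[OF dn] by simp
      moreover have "emeasure S (Bad n k D (Suc T) s) \<le> 1" by (rule S.emeasure_le_1)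
      ultimately show ?thesis unfolding S_def M_def
        by (metis ennreal_1 ennreal_leI order_trans)
    next
      case ck: False
      define Imp where "Imp = {m. onemax n x < onemax n (flip x (R n m))}"
      define Q where "Q = (if Suc c \<le> k then q n d ^ (k - Suc c) else 0)"
      have Q0: "0 \<le> Q" unfolding Q_def using q_nonneg[OF dn] by auto
      have Sd0: "0 \<le> Sd n k D d" using Sd_nonneg[OF dn] .
      have sec: "{X \<in> space S. m ## X \<in> Bad n k D (Suc T) s} = Bad n k D T (ea_step n s (R n m))" for m
        using Dd ck unfolding Bad_Suc S_def M_def by (auto simp: space_stream_space d_def x_def c_def)
      have "emeasure S (Bad n k D (Suc T) s) =
          (\<integral>\<^sup>+m. emeasure S {X \<in> space S. m ## X \<in> Bad n k D (Suc T) s} \<partial>M)"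
        unfolding S_def M_def by (rule prob_space.emeasure_stream_space[OF prob_space_measure_pmf Bad_sets])
      also have "\<dots> = (\<integral>\<^sup>+m. emeasure S (Bad n k D T (ea_step n s (R n m))) \<partial>M)"
        by (simp add: sec)
      also have "\<dots> \<le> (\<integral>\<^sup>+m. ennreal (Phi n k D (ea_step n s (R n m))) \<partial>M)"
        by (intro nn_integral_mono) (use Suc.IH in \<open>simp add: S_def M_def\<close>)
      also have "\<dots> \<le> (\<integral>\<^sup>+m. ennreal (Sd n k D d) + ennreal Q * indicator (space M - Imp) m \<partial>M)"
      proof (intro nn_integral_mono)
        fix m
        have "Phi n k D (ea_step n s (R n m)) \<le> Sd n k D d + Q * indicator (space M - Imp) m"
          using Phi_step[of D n s k "R n m"] Dd unfolding Q_def Imp_def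
          by (auto simp: x_def d_def c_def M_def split: split_indicator)
        then have "ennreal (Phi n k D (ea_step n s (R n m))) \<le> ennreal (Sd n k D d + Q * indicator (space M - Imp) m)"
          by (rule ennreal_leI)
        also have "\<dots> = ennreal (Sd n k D d) + ennreal Q * indicator (space M - Imp) m"
          using Q0 Sd0 by (simp add: ennreal_plus ennreal_mult split: split_indicator)
        finally show "ennreal (Phi n k D (ea_step n s (R n m))) \<le> ennreal (Sd n k D d) + ennreal Q * indicator (space M - Imp) m" .
      qed
      also have "\<dots> = ennreal (Sd n k D d) + ennreal Q * emeasure M (space M - Imp)"
        by (subst nn_integral_add) (auto simp: M_def nn_integral_cmult_indicator measure_pmf.emeasure_space_1)
      also have "\<dots> = ennreal (Sd n k D d + Q * measure M (space M - Imp))"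
        using Q0 Sd0 by (simp add: M_def measure_pmf.emeasure_eq_measure ennreal_plus ennreal_mult)
      also have "\<dots> \<le> ennreal (Phi n k D s)"
      proof (rule ennreal_leI)
        have "measure M (space M - Imp) = 1 - measure M Imp"
          unfolding M_def by (rule measure_pmf.prob_compl) simp
        also have "\<dots> \<le> q n d"
          using prob_improve[OF n, of x] unfolding q_def Imp_def d_def M_def by simp
        finally have "Q * measure M (space M - Imp) \<le> Q * q n d" using Q0 by (intro mult_left_mono)
        also have "\<dots> \<le> (if c \<le> k then q n d ^ (k - c) else 0)"
        proof (cases "Suc c \<le> k")
          case True
          then have "k - c = Suc (k - Suc c)" by simp
          then show ?thesis using True unfolding Q_def by simp
        next
          case False then show ?thesis using ck unfolding Q_def by simp
        qed
        finally show "Sd n k D d + Q * measure M (space M - Imp) \<le> Phi n k D s"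
          unfolding Phi_def x_def[symmetric] c_def[symmetric] d_def[symmetric] using Dd by simp
      qed
      finally show ?thesis unfolding S_def M_def .
    qed
  qed
qed

lemma theta_part:
  fixes lam k :: "nat \<Rightarrow> nat"
  assumes "(\<lambda>n. real (lam n)) \<in> \<Theta>(\<lambda>n. ln (real n))"
    and "(\<lambda>n. real (k n)) \<in> \<Theta>(\<lambda>n. real (lam n) * ln (real n))"
  shows "(\<lambda>n. 2 * exp 1 * real n * ln (real n) / real (k n)) \<in> \<Theta>(\<lambda>n. real n / ln (real n))"
proof -
  have "(\<lambda>n. real (lam n) * ln (real n)) \<in> \<Theta>(\<lambda>n. ln (real n) * ln (real n))"
    using assms(1) by (rule landau_theta.mult_right)
  then have k: "(\<lambda>n. real (k n)) \<in> \<Theta>(\<lambda>n. ln (real n) * ln (real n))"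
    using assms(2) landau_theta.trans by blast
  have "(\<lambda>n. 2 * exp 1 * real n * ln (real n) / real (k n)) \<in>
        \<Theta>(\<lambda>n. 2 * exp 1 * real n * ln (real n) / (ln (real n) * ln (real n)))"
    by (rule bigtheta_divide[OF _ k]) simp
  also have "(\<lambda>n. 2 * exp 1 * real n * ln (real n) / (ln (real n) * ln (real n))) \<in>
        \<Theta>(\<lambda>n. (2 * exp 1) * (real n / ln (real n)))"
  proof (rule bigthetaI_cong)
    show "\<forall>\<^sub>F n in sequentially. 2 * exp 1 * real n * ln (real n) / (ln (real n) * ln (real n)) =
        (2 * exp 1) * (real n / ln (real n))"
      using eventually_ge_at_top[of "2::nat"]
    proof eventually_elim
      case (elim n)
      then have "ln (real n) > 0" by simp
      then show ?case by (simp add: field_simps)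
    qed
  qed
  also have "(\<lambda>n. (2 * exp 1) * (real n / ln (real n))) \<in> \<Theta>(\<lambda>n. real n / ln (real n))"
    by (subst landau_theta.cmult_in_iff) simp_all
  finally show ?thesis .
qed

lemma Phi_final:
  assumes n: "1 \<le> n" and k: "1 \<le> k" and D: "D = 2 * exp 1 * real n * ln (real n) / real k"
  shows "Phi n k D (b, 0) \<le> 1 / real n"
proof -
  have D0: "0 \<le> D" unfolding D using n by simp
  have tm: "q n d' ^ k \<le> 1 / real n ^ 2" if "D < real d'" "d' \<le> n" for d'
  proof -
    have q0: "0 \<le> q n d'" using q_nonneg[OF that(2)] .
    have "q n d' \<le> exp (- (real d' * p1 n))" unfolding q_def
      using exp_ge_add_one_self[of "- (real d' * p1 n)"] by simp
    then have "q n d' ^ k \<le> exp (- (real d' * p1 n)) ^ k" using q0 by (intro power_mono)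
    also have "\<dots> = exp (- (real d' * p1 n * real k))" by (simp add: exp_of_nat_mult[symmetric] mult.commute)
    also have "\<dots> \<le> exp (- (D * (1 / (exp 1 * real n)) * real k))"
    proof -
      have "D * (1 / (exp 1 * real n)) \<le> real d' * p1 n"
        using that(1) D0 p1_ge[OF n] by (intro mult_mono) auto
      then have "D * (1 / (exp 1 * real n)) * real k \<le> real d' * p1 n * real k"
        by (rule mult_right_mono) simp
      then show ?thesis by simp
    qed
    also have "D * (1 / (exp 1 * real n)) * real k = 2 * ln (real n)"
      unfolding D using n k by (simp add: field_simps)
    also have "exp (- (2 * ln (real n))) = 1 / real n ^ 2"
    proof -
      have "2 * ln (real n) = ln (real n ^ 2)" using n by (simp add: ln_realpow)
      then have "exp (2 * ln (real n)) = real n ^ 2" using n by simp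
      then show ?thesis by (simp add: exp_minus inverse_eq_divide)
    qed
    finally show ?thesis .
  qed
  define d where "d = dist_opt n b"
  have dn: "d \<le> n" unfolding d_def by (rule dist_le)
  show ?thesis
  proof (cases "real d \<le> D")
    case True then show ?thesis unfolding Phi_def using n by (simp add: d_def)
  next
    case False
    then have "Phi n k D (b, 0) = q n d ^ k + Sd n k D d" unfolding Phi_def d_def by simp
    also have "\<dots> \<le> 1 / real n ^ 2 + (\<Sum>d'\<in>{d'. D < real d' \<and> d' < d}. 1 / real n ^ 2)"
      unfolding Sd_def using False dn by (intro add_mono tm sum_mono) auto
    also have "\<dots> = (1 + real (card {d'. D < real d' \<and> d' < d})) / real n ^ 2"
      by (simp add: add_divide_distrib)
    also have "\<dots> \<le> real n / real n ^ 2"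
    proof -
      have "{d'. D < real d' \<and> d' < d} \<subseteq> {1..<d}" using D0 by auto
      then have "card {d'. D < real d' \<and> d' < d} \<le> d - 1"
        using card_mono[of "{1..<d}"] by fastforce
      then have "1 + real (card {d'. D < real d' \<and> d' < d}) \<le> real n"
        using dn False D0 by linarith
      then show ?thesis by (intro divide_right_mono) auto
    qed
    also have "\<dots> = 1 / real n" using n by (simp add: power2_eq_square)
    finally show ?thesis .
  qed
qed

lemma FF_ea_run: "FF n (R n x0, 0) t \<omega> = (R n (fst (ea_run n x0 \<omega> t)), snd (ea_run n x0 \<omega> t))"
  unfolding FF_def ea_run_runF using runF_R[of n "(x0, 0)" \<omega> t] by simp

lemma switch_eq:
  "switch_early n k D = (\<Union>b\<in>bitstrings n. {x0. R n x0 = b} \<times> (\<Union>T. Bad n k D T (b, 0)))"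
proof -
  have *: "(x0, \<omega>) \<in> switch_early n k D \<longleftrightarrow> \<omega> \<in> (\<Union>T. Bad n k D T (R n x0, 0))" for x0 \<omega>
    unfolding switch_early_def Bad_def by (auto simp: FF_ea_run dist_R)
  show ?thesis
  proof (intro set_eqI iffI)
    fix z assume "z \<in> switch_early n k D"
    then show "z \<in> (\<Union>b\<in>bitstrings n. {x0. R n x0 = b} \<times> (\<Union>T. Bad n k D T (b, 0)))"
      using * [of "fst z" "snd z"] R_bitstrings[of n "fst z"] by (cases z) auto
  next
    fix z assume "z \<in> (\<Union>b\<in>bitstrings n. {x0. R n x0 = b} \<times> (\<Union>T. Bad n k D T (b, 0)))"
    then show "z \<in> switch_early n k D"
      using * [of "fst z" "snd z"] by (cases z) auto
  qed
qed

lemma Bad_mono: "incseq (\<lambda>T. Bad n k D T s)"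
  unfolding incseq_def Bad_def by (auto intro: order_trans)

lemma main_prob:
  assumes n: "1 \<le> n" and k: "1 \<le> k" and D: "D = 2 * exp 1 * real n * ln (real n) / real k"
  shows "switch_early n k D \<in> sets (ea_space n) \<and> measure (ea_space n) (switch_early n k D) \<le> 1 / real n"
proof -
  define M1 where "M1 = measure_pmf (init_pmf n)"
  define S where "S = stream_space (measure_pmf (mask_pmf n))"
  interpret S: prob_space S unfolding S_def by (rule prob_space.prob_space_stream_space[OF prob_space_measure_pmf])
  have ea: "ea_space n = M1 \<Otimes>\<^sub>M S" unfolding ea_space_def M1_def S_def ..
  have Ssets: "(\<Union>T. Bad n k D T b) \<in> sets S" for b
    unfolding S_def by (intro sets.countable_UN) (auto intro: Bad_sets)
  have sets: "switch_early n k D \<in> sets (M1 \<Otimes>\<^sub>M S)"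
    unfolding switch_eq
    by (intro sets.finite_UN finite_bitstrings pair_measureI Ssets) (auto simp: M1_def)
  have Sbound: "emeasure S (\<Union>T. Bad n k D T (b, 0)) \<le> ennreal (1 / real n)" for b
  proof -
    have "emeasure S (\<Union>T. Bad n k D T (b, 0)) = (SUP T. emeasure S (Bad n k D T (b, 0)))"
      by (rule SUP_emeasure_incseq[symmetric]) (auto simp: S_def Bad_sets Bad_mono)
    also have "\<dots> \<le> ennreal (1 / real n)"
    proof (rule SUP_least)
      fix T
      have "emeasure S (Bad n k D T (b, 0)) \<le> ennreal (Phi n k D (b, 0))"
        unfolding S_def by (rule Bad_bound[OF n])
      also have "\<dots> \<le> ennreal (1 / real n)" by (rule ennreal_leI[OF Phi_final[OF n k D]])
      finally show "emeasure S (Bad n k D T (b, 0)) \<le> ennreal (1 / real n)" .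
    qed
    finally show ?thesis .
  qed
  have sec: "Pair x0 -` switch_early n k D = (\<Union>T. Bad n k D T (R n x0, 0))" for x0
    unfolding switch_eq using R_bitstrings[of n x0] by auto
  have "emeasure (M1 \<Otimes>\<^sub>M S) (switch_early n k D) = (\<integral>\<^sup>+x0. emeasure S (Pair x0 -` switch_early n k D) \<partial>M1)"
    by (rule S.emeasure_pair_measure_alt[OF sets])
  also have "\<dots> \<le> (\<integral>\<^sup>+x0. ennreal (1 / real n) \<partial>M1)"
    by (intro nn_integral_mono) (simp add: sec Sbound)
  also have "\<dots> = ennreal (1 / real n)"
    by (simp add: M1_def measure_pmf.emeasure_space_1)
  finally have "emeasure (M1 \<Otimes>\<^sub>M S) (switch_early n k D) \<le> ennreal (1 / real n)" .
  then have "measure (M1 \<Otimes>\<^sub>M S) (switch_early n k D) \<le> 1 / real n"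
    unfolding measure_def by (intro enn2real_leI) auto
  then show ?thesis using sets unfolding ea by simp
qed

theorem lemma5p2:
  fixes lam k :: "nat \<Rightarrow> nat"
  assumes "(\<lambda>n. real (lam n)) \<in> \<Theta>(\<lambda>n. ln (real n))"
    and "(\<lambda>n. real (k n)) \<in> \<Theta>(\<lambda>n. real (lam n) * ln (real n))"
  defines "D \<equiv> (\<lambda>n. 2 * exp 1 * real n * ln (real n) / real (k n))"
  shows "D \<in> \<Theta>(\<lambda>n. real n / ln (real n)) \<and>
         (\<forall>n. 1 \<le> n \<and> 1 \<le> k n \<longrightarrow>
              switch_early n (k n) (D n) \<in> sets (ea_space n) \<and>
              measure (ea_space n) (switch_early n (k n) (D n)) \<le> 1 / real n)"
proof (intro conjI allI impI)
  show "D \<in> \<Theta>(\<lambda>n. real n / ln (real n))"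
    unfolding D_def by (rule theta_part[OF assms(1,2)])
next
  fix n assume a: "1 \<le> n \<and> 1 \<le> k n"
  have "switch_early n (k n) (D n) \<in> sets (ea_space n) \<and>
        measure (ea_space n) (switch_early n (k n) (D n)) \<le> 1 / real n"
    using a by (intro main_prob) (auto simp: D_def)
  then show "switch_early n (k n) (D n) \<in> sets (ea_space n)"
    "measure (ea_space n) (switch_early n (k n) (D n)) \<le> 1 / real n" by auto
qed

end
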